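(* Let $\mathcal H$ be a multiplicative representation. Complex conjugation $\alpha\mapsto\bar\alpha$ on $\mathcal H^{\mathrm{fin}}$ extends by continuity to an antilinear involution $v\mapsto\bar v$ on $\mathcal H$, satisfying $\langle\bar v,\bar w\rangle_{\mathcal H}=\overline{\langle v,w\rangle_{\mathcal H}}$, and in particular $\|\bar v\|_{\mathcal H}=\|v\|_{\mathcal H}$, for all $v,w\in\mathcal H$.
   Context: $G=\mathrm{PSL}_2(\mathbf R)$, $K=\mathrm{PSO}_2(\mathbf R)$, $\mathfrak g=\mathfrak{sl}_2(\mathbf C)$. A multiplicative representation is a unitary $G$-representation $\mathcal H$ (inner product linear in the first argument) with discrete spectrum (Hilbert sum of irreducibles, finitely many with Casimir eigenvalue in any bounded set), with $\mathcal H^{\rm fin}$ the algebraic sum of $K$-finite vectors of the summands, together with a bilinear map $\mathcal H^{\rm fin}\times\mathcal H^{\rm fin}\to\mathcal H^\infty$ (smooth vectors) that is commutative, has a unit $\mathbf 1$ of norm $1$ with $\mathcal H^G=\mathbf C\mathbf 1$, obeys $X(\alpha\beta)=(X\alpha)\beta+\alpha(X\beta)$ for $X\in\mathfrak g$, and satisfies crossing symmetry $\langle\alpha_1\alpha_2,\bar\alpha_3\bar\alpha_4\rangle=\langle\alpha_{\sigma(1)}\alpha_{\sigma(2)},\bar\alpha_{\sigma(3)}\bar\alpha_{\sigma(4)}\rangle$ for $\sigma\in S_4$, where for each $\alpha\in\mathcal H^{\rm fin}$ the complex conjugate $\bar\alpha$ is the (assumed to exist, necessarily unique) element of $\mathcal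 H^{\rm fin}$ with $\langle\alpha\beta,\gamma\rangle=\langle\beta,\bar\alpha\gamma\rangle$ for all $\beta,\gamma\in\mathcal H^{\rm fin}$. *)

theory Defs
  imports "HOL-Analysis.Analysis"
begin

text \<open>The Hilbert space H is a type 'h of class real_normed_vector + complete_space,
  together with J (multiplication by the imaginary unit) and a complex-valued inner
  product ip, linear in the FIRST argument, whose norm is the norm of 'h.\<close>

definition cscale :: "('h::real_vector \<Rightarrow> 'h) \<Rightarrow> complex \<Rightarrow> 'h \<Rightarrow> 'h" where
  "cscale J z v = Re z *\<^sub>R v + Im z *\<^sub>R J v"

definition complex_hilbert :: "('h::{real_normed_vector,complete_space} \<Rightarrow> 'h) \<Rightarrow> ('h \<Rightarrow> 'h \<Rightarrow> complex) \<Rightarrow> bool" where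
  "complex_hilbert J ip \<longleftrightarrow>
     linear J \<and> (\<forall>v. J (J v) = - v) \<and>
     (\<forall>u v w. ip (u + v) w = ip u w + ip v w) \<and>
     (\<forall>r v w. ip (r *\<^sub>R v) w = complex_of_real r * ip v w) \<and>
     (\<forall>v w. ip (J v) w = \<i> * ip v w) \<and>
     (\<forall>v w. ip w v = cnj (ip v w)) \<and>
     (\<forall>v. ip v v = complex_of_real ((norm v)\<^sup>2))"

definition clinear_map :: "('h::real_vector \<Rightarrow> 'h) \<Rightarrow> ('h \<Rightarrow> 'h) \<Rightarrow> bool" where
  "clinear_map J T \<longleftrightarrow> linear T \<and> (\<forall>v. T (J v) = J (T v))"

definition csubspace :: "('h::real_vector \<Rightarrow> 'h) \<Rightarrow> 'h set \<Rightarrow> bool" where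
  "csubspace J W \<longleftrightarrow> subspace W \<and> J ` W \<subseteq> W"

section \<open>The group G = PSL_2(R), realised as SL_2(R) acting trivially through -1\<close>

definition SL2 :: "(real^2^2) set" where
  "SL2 = {g. det g = 1}"

definition mat2 :: "real \<Rightarrow> real \<Rightarrow> real \<Rightarrow> real \<Rightarrow> real^2^2" where
  "mat2 a b c d = vector [vector [a, b], vector [c, d]]"

text \<open>K = PSO_2(R): image of the rotations.\<close>
definition rot :: "real \<Rightarrow> real^2^2" where
  "rot \<theta> = mat2 (cos \<theta>) (- sin \<theta>) (sin \<theta>) (cos \<theta>)"

text \<open>One-parameter subgroups exp(tH), exp(tE), exp(tF) for the standard basis
  H = diag(1,-1), E = e_12, F = e_21 of sl_2(R).\<close>
definition expH :: "real \<Rightarrow> real^2^2" where "expH t = mat2 (exp t) 0 0 (exp (- t))"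
definition expE :: "real \<Rightarrow> real^2^2" where "expE t = mat2 1 t 0 1"
definition expF :: "real \<Rightarrow> real^2^2" where "expF t = mat2 1 0 t 1"

text \<open>Iwasawa parametrisation (x,y,theta) |-> n(x) a(y) k(theta), y > 0; a surjective
  local diffeomorphism R x R_{>0} x R -> SL_2(R), used to define smoothness on G.\<close>
definition iwasawa :: "real^3 \<Rightarrow> real^2^2" where
  "iwasawa p = mat2 1 (p$1) 0 1 ** mat2 (sqrt (p$2)) 0 0 (1 / sqrt (p$2)) ** rot (p$3)"

definition iwasawa_domain :: "(real^3) set" where
  "iwasawa_domain = {p. p$2 > 0}"

definition unitary_rep ::
  "('h::{real_normed_vector,complete_space} \<Rightarrow> 'h) \<Rightarrow> ('h \<Rightarrow> 'h \<Rightarrow> complex) \<Rightarrow> (real^2^2 \<Rightarrow> 'h \<Rightarrow> 'h) \<Rightarrow> bool" where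
  "unitary_rep J ip \<pi> \<longleftrightarrow>
     (\<forall>g\<in>SL2. clinear_map J (\<pi> g) \<and> (\<forall>v w. ip (\<pi> g v) (\<pi> g w) = ip v w)) \<and>
     \<pi> (mat 1) = id \<and> \<pi> (- mat 1) = id \<and>
     (\<forall>g\<in>SL2. \<forall>h\<in>SL2. \<pi> (g ** h) = \<pi> g \<circ> \<pi> h) \<and>
     (\<forall>v. continuous_on SL2 (\<lambda>g. \<pi> g v))"

fun iter_pd :: "3 list \<Rightarrow> (real^3 \<Rightarrow> 'b::real_normed_vector) \<Rightarrow> real^3 \<Rightarrow> 'b" where
  "iter_pd [] f = f"
| "iter_pd (i # is) f = (\<lambda>x. vector_derivative (\<lambda>t. iter_pd is f (x + t *\<^sub>R axis i 1)) (at 0))"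

definition smooth_on :: "(real^3) set \<Rightarrow> (real^3 \<Rightarrow> 'b::real_normed_vector) \<Rightarrow> bool" where
  "smooth_on S f \<longleftrightarrow>
     (\<forall>is. continuous_on S (iter_pd is f) \<and>
       (\<forall>i. \<forall>x\<in>S. ((\<lambda>t. iter_pd is f (x + t *\<^sub>R axis i 1)) has_vector_derivative iter_pd (i # is) f x) (at 0)))"

definition smooth_vector :: "(real^2^2 \<Rightarrow> 'h \<Rightarrow> 'h::real_normed_vector) \<Rightarrow> 'h \<Rightarrow> bool" where
  "smooth_vector \<pi> v \<longleftrightarrow> smooth_on iwasawa_domain (\<lambda>p. \<pi> (iwasawa p) v)"

definition dact :: "(real^2^2 \<Rightarrow> 'h \<Rightarrow> 'h::real_normed_vector) \<Rightarrow> (real \<Rightarrow> real^2^2) \<Rightarrow> 'h \<Rightarrow> 'h" where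
  "dact \<pi> c v = vector_derivative (\<lambda>t. \<pi> (c t) v) (at 0)"

text \<open>g = sl_2(C) = trace-zero complex 2x2 matrices; X = X11 H + X12 E + X21 F,
  acting by the complex-linear extension of the derived representation.\<close>
definition sl2C :: "(complex^2^2) set" where
  "sl2C = {X. X$1$1 + X$2$2 = 0}"

definition lie_act :: "('h \<Rightarrow> 'h) \<Rightarrow> (real^2^2 \<Rightarrow> 'h \<Rightarrow> 'h::real_normed_vector) \<Rightarrow> complex^2^2 \<Rightarrow> 'h \<Rightarrow> 'h" where
  "lie_act J \<pi> X v = cscale J (X$1$1) (dact \<pi> expH v) + cscale J (X$1$2) (dact \<pi> expE v)
                     + cscale J (X$2$1) (dact \<pi> expF v)"

text \<open>Casimir element Omega = H^2 + 2EF + 2FE (any normalisation gives the same finiteness condition).\<close>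
definition casimir :: "(real^2^2 \<Rightarrow> 'h \<Rightarrow> 'h::real_normed_vector) \<Rightarrow> 'h \<Rightarrow> 'h" where
  "casimir \<pi> v = dact \<pi> expH (dact \<pi> expH v)
                 + 2 *\<^sub>R dact \<pi> expE (dact \<pi> expF v) + 2 *\<^sub>R dact \<pi> expF (dact \<pi> expE v)"

definition K_finite :: "('h \<Rightarrow> 'h) \<Rightarrow> (real^2^2 \<Rightarrow> 'h \<Rightarrow> 'h::real_vector) \<Rightarrow> 'h \<Rightarrow> bool" where
  "K_finite J \<pi> v \<longleftrightarrow> (\<exists>B. finite B \<and> (\<forall>\<theta>. \<pi> (rot \<theta>) v \<in> span (B \<union> J ` B)))"

definition G_invariant :: "(real^2^2 \<Rightarrow> 'h \<Rightarrow> 'h) \<Rightarrow> 'h set \<Rightarrow> bool" where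
  "G_invariant \<pi> W \<longleftrightarrow> (\<forall>g\<in>SL2. \<pi> g ` W \<subseteq> W)"

definition irreducible_sub ::
  "('h \<Rightarrow> 'h) \<Rightarrow> (real^2^2 \<Rightarrow> 'h \<Rightarrow> 'h::real_normed_vector) \<Rightarrow> 'h set \<Rightarrow> bool" where
  "irreducible_sub J \<pi> V \<longleftrightarrow>
     csubspace J V \<and> closed V \<and> G_invariant \<pi> V \<and> V \<noteq> {0} \<and>
     (\<forall>W. csubspace J W \<and> closed W \<and> G_invariant \<pi> W \<and> W \<subseteq> V \<longrightarrow> W = {0} \<or> W = V)"

definition discrete_spectrum_with_fin ::
  "('h::{real_normed_vector,complete_space} \<Rightarrow> 'h) \<Rightarrow> ('h \<Rightarrow> 'h \<Rightarrow> complex) \<Rightarrow> (real^2^2 \<Rightarrow> 'h \<Rightarrow> 'h) \<Rightarrow> 'h set \<Rightarrow> bool" where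
  "discrete_spectrum_with_fin J ip \<pi> Hfin \<longleftrightarrow>
     (\<exists>(I :: 'h set set) (ev :: 'h set \<Rightarrow> complex).
        (\<forall>V\<in>I. irreducible_sub J \<pi> V) \<and>
        (\<forall>V\<in>I. \<forall>W\<in>I. V \<noteq> W \<longrightarrow> (\<forall>v\<in>V. \<forall>w\<in>W. ip v w = 0)) \<and>
        closure (span (\<Union>I)) = UNIV \<and>
        (\<forall>V\<in>I. \<forall>v\<in>V. smooth_vector \<pi> v \<longrightarrow> casimir \<pi> v = cscale J (ev V) v) \<and>
        (\<forall>B::real. finite {V\<in>I. cmod (ev V) \<le> B}) \<and>
        Hfin = span (\<Union>V\<in>I. {v \<in> V. K_finite J \<pi> v}))"

definition is_conj_of :: "('h \<Rightarrow> 'h \<Rightarrow> complex) \<Rightarrow> 'h set \<Rightarrow> ('h \<Rightarrow> 'h \<Rightarrow> 'h) \<Rightarrow> 'h \<Rightarrow> 'h \<Rightarrow> bool" where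
  "is_conj_of ip Hfin mul a b \<longleftrightarrow>
     b \<in> Hfin \<and> (\<forall>x\<in>Hfin. \<forall>y\<in>Hfin. ip (mul a x) y = ip x (mul b y))"

definition conj_of :: "('h \<Rightarrow> 'h \<Rightarrow> complex) \<Rightarrow> 'h set \<Rightarrow> ('h \<Rightarrow> 'h \<Rightarrow> 'h) \<Rightarrow> 'h \<Rightarrow> 'h" where
  "conj_of ip Hfin mul a = (THE b. is_conj_of ip Hfin mul a b)"

definition multiplicative_rep ::
  "('h::{real_normed_vector,complete_space} \<Rightarrow> 'h) \<Rightarrow> ('h \<Rightarrow> 'h \<Rightarrow> complex) \<Rightarrow> (real^2^2 \<Rightarrow> 'h \<Rightarrow> 'h)
    \<Rightarrow> 'h set \<Rightarrow> ('h \<Rightarrow> 'h \<Rightarrow> 'h) \<Rightarrow> 'h \<Rightarrow> bool" where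
  "multiplicative_rep J ip \<pi> Hfin mul one \<longleftrightarrow>
     complex_hilbert J ip \<and> unitary_rep J ip \<pi> \<and> discrete_spectrum_with_fin J ip \<pi> Hfin \<and>
     \<comment> \<open>bilinear map Hfin x Hfin -> smooth vectors\<close>
     (\<forall>a\<in>Hfin. \<forall>b\<in>Hfin. \<forall>c\<in>Hfin. mul (a + b) c = mul a c + mul b c \<and> mul a (b + c) = mul a b + mul a c) \<and>
     (\<forall>z. \<forall>a\<in>Hfin. \<forall>b\<in>Hfin. mul (cscale J z a) b = cscale J z (mul a b) \<and> mul a (cscale J z b) = cscale J z (mul a b)) \<and>
     (\<forall>a\<in>Hfin. \<forall>b\<in>Hfin. smooth_vector \<pi> (mul a b)) \<and>
     \<comment> \<open>commutative, with unit of norm 1 spanning the G-invariants\<close>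
     (\<forall>a\<in>Hfin. \<forall>b\<in>Hfin. mul a b = mul b a) \<and>
     one \<in> Hfin \<and> (\<forall>a\<in>Hfin. mul one a = a) \<and> norm one = 1 \<and>
     {v. \<forall>g\<in>SL2. \<pi> g v = v} = range (\<lambda>z. cscale J z one) \<and>
     \<comment> \<open>Leibniz rule for g = sl_2(C)\<close>
     (\<forall>X\<in>sl2C. \<forall>a\<in>Hfin. \<forall>b\<in>Hfin.
        lie_act J \<pi> X (mul a b) = mul (lie_act J \<pi> X a) b + mul a (lie_act J \<pi> X b)) \<and>
     \<comment> \<open>existence of complex conjugates\<close>
     (\<forall>a\<in>Hfin. \<exists>b. is_conj_of ip Hfin mul a b) \<and>
     \<comment> \<open>crossing symmetry\<close>
     (\<forall>(\<alpha>::nat \<Rightarrow> 'h) \<sigma>. (\<forall>k\<in>{1..4}. \<alpha> k \<in> Hfin) \<and> \<sigma> permutes {1..4} \<longrightarrow>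
        ip (mul (\<alpha> 1) (\<alpha> 2)) (mul (conj_of ip Hfin mul (\<alpha> 3)) (conj_of ip Hfin mul (\<alpha> 4)))
        = ip (mul (\<alpha> (\<sigma> 1)) (\<alpha> (\<sigma> 2)))
             (mul (conj_of ip Hfin mul (\<alpha> (\<sigma> 3))) (conj_of ip Hfin mul (\<alpha> (\<sigma> 4)))))"

end

theory Submission
  imports Defs
begin

locale chil =
  fixes J :: "'h::{real_normed_vector,complete_space} \<Rightarrow> 'h" and ip :: "'h \<Rightarrow> 'h \<Rightarrow> complex"
  assumes ch: "complex_hilbert J ip"
begin

lemma linJ: "linear J" using ch unfolding complex_hilbert_def by blast
lemma JJ[simp]: "J (J v) = - v" using ch unfolding complex_hilbert_def by blast
lemma ip_add_left: "ip (u + v) w = ip u w + ip v w" using ch unfolding complex_hilbert_def by blast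
lemma ip_scaleR_left: "ip (r *\<^sub>R v) w = complex_of_real r * ip v w" using ch unfolding complex_hilbert_def by blast
lemma ip_J_left: "ip (J v) w = \<i> * ip v w" using ch unfolding complex_hilbert_def by blast
lemma ip_sym: "ip w v = cnj (ip v w)" using ch unfolding complex_hilbert_def by blast
lemma ip_self: "ip v v = complex_of_real ((norm v)\<^sup>2)" using ch unfolding complex_hilbert_def by blast

lemma J_add: "J (a + b) = J a + J b" using linJ by (simp add: linear_add)
lemma J_scaleR: "J (r *\<^sub>R a) = r *\<^sub>R J a" using linJ by (simp add: linear_scale)
lemma J_minus: "J (- a) = - J a" using linJ by (simp add: linear_neg)
lemma J_diff: "J (a - b) = J a - J b" using linJ by (simp add: linear_diff)
lemma J_zero: "J 0 = 0" using linJ by (simp add: linear_0)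

lemma ip_add_right: "ip w (u + v) = ip w u + ip w v"
  using ip_sym[of w "u+v"] ip_sym[of w u] ip_sym[of w v] ip_add_left[of u v w] by simp
lemma ip_scaleR_right: "ip w (r *\<^sub>R v) = complex_of_real r * ip w v"
  using ip_sym[of w "r *\<^sub>R v"] ip_sym[of w v] ip_scaleR_left[of r v w] by simp
lemma ip_J_right: "ip w (J v) = - \<i> * ip w v"
  using ip_sym[of w "J v"] ip_sym[of w v] ip_J_left[of v w] by simp
lemma ip_zero_left[simp]: "ip 0 w = 0"
  using ip_add_left[of 0 0 w] by simp
lemma ip_zero_right[simp]: "ip w 0 = 0"
  using ip_add_right[of w 0 0] by simp
lemma ip_minus_left: "ip (- v) w = - ip v w"
  using ip_add_left[of v "-v" w] by (simp add: eq_neg_iff_add_eq_0 add.commute)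
lemma ip_minus_right: "ip w (- v) = - ip w v"
  using ip_add_right[of w v "-v"] by (simp add: eq_neg_iff_add_eq_0 add.commute)
lemma ip_diff_left: "ip (u - v) w = ip u w - ip v w"
  using ip_add_left[of u "-v" w] ip_minus_left by simp
lemma ip_diff_right: "ip w (u - v) = ip w u - ip w v"
  using ip_add_right[of w u "-v"] ip_minus_right by simp

lemma ip_cscale_left: "ip (cscale J z v) w = z * ip v w"
  unfolding cscale_def ip_add_left ip_scaleR_left ip_J_left
  by (simp add: complex_eq_iff algebra_simps)
lemma ip_cscale_right: "ip w (cscale J z v) = cnj z * ip w v"
  using ip_sym[of w "cscale J z v"] ip_sym[of w v] ip_cscale_left[of z v w] by simp

lemma ip_self_zero: "ip v v = 0 \<longleftrightarrow> v = 0"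
  by (simp add: ip_self)

lemma norm_J: "norm (J v) = norm v"
proof -
  have "ip (J v) (J v) = ip v v" by (simp add: ip_J_left ip_J_right)
  hence "(norm (J v))\<^sup>2 = (norm v)\<^sup>2" unfolding ip_self of_real_eq_iff .
  thus ?thesis using power2_eq_iff_nonneg norm_ge_zero by blast
qed

lemma bl_J: "bounded_linear J"
  by (rule bounded_linear_intro[where K=1]) (auto simp: J_add J_scaleR norm_J)

lemma Re_ip_self: "Re (ip v v) = (norm v)\<^sup>2" by (simp add: ip_self)

lemma re_polar: "Re (ip x y) = ((norm (x + y))\<^sup>2 - (norm (x - y))\<^sup>2) / 4"
proof -
  have a: "Re (ip (x+y) (x+y)) = Re (ip x x) + Re (ip y y) + 2 * Re (ip x y)"
    using ip_sym[of y x] by (simp add: ip_add_left ip_add_right)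
  have b: "Re (ip (x-y) (x-y)) = Re (ip x x) + Re (ip y y) - 2 * Re (ip x y)"
    using ip_sym[of y x] by (simp add: ip_diff_left ip_diff_right)
  show ?thesis using a b by (simp add: Re_ip_self)
qed

lemma polar: "ip x y = complex_of_real (((norm (x + y))\<^sup>2 - (norm (x - y))\<^sup>2) / 4)
   + \<i> * complex_of_real (((norm (x + J y))\<^sup>2 - (norm (x - J y))\<^sup>2) / 4)"
proof -
  have "Im (ip x y) = Re (ip x (J y))" by (simp add: ip_J_right)
  thus ?thesis by (simp add: complex_eq_iff re_polar[symmetric])
qed

lemma continuous_on_ip[continuous_intros]:
  assumes "continuous_on S f" "continuous_on S g"
  shows "continuous_on S (\<lambda>x. ip (f x) (g x))"
proof -
  have cJ: "continuous_on S (\<lambda>x. J (g x))"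
    using bounded_linear.continuous_on[OF bl_J assms(2)] .
  show ?thesis unfolding polar
    by (intro continuous_intros assms cJ) auto
qed

lemma ip_eq_norm: "ip u u = ip v v \<Longrightarrow> norm u = norm v"
  unfolding ip_self of_real_eq_iff using power2_eq_iff_nonneg norm_ge_zero by blast

end

locale mr = chil J ip for J :: "'h::{real_normed_vector,complete_space} \<Rightarrow> 'h" and ip +
  fixes Hfin :: "'h set" and mul :: "'h \<Rightarrow> 'h \<Rightarrow> 'h" and one :: 'h
  assumes sub: "subspace Hfin"
    and one_in: "one \<in> Hfin"
    and mul_one: "\<forall>a\<in>Hfin. mul one a = a"
    and comm: "\<forall>a\<in>Hfin. \<forall>b\<in>Hfin. mul a b = mul b a"
    and ex_conj: "\<forall>a\<in>Hfin. \<exists>b. is_conj_of ip Hfin mul a b"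
begin

abbreviation "cj \<equiv> conj_of ip Hfin mul"

lemma mul_one_right: "a \<in> Hfin \<Longrightarrow> mul a one = a"
  using comm one_in mul_one by metis

lemma conj_unique:
  assumes "is_conj_of ip Hfin mul a b" "is_conj_of ip Hfin mul a b'" "a \<in> Hfin"
  shows "b = b'"
proof -
  have bH: "b \<in> Hfin" "b' \<in> Hfin" using assms by (auto simp: is_conj_of_def)
  have "ip x b = ip x b'" if "x \<in> Hfin" for x
  proof -
    have "ip (mul a x) one = ip x (mul b one)" using assms(1) that one_in by (auto simp: is_conj_of_def)
    moreover have "ip (mul a x) one = ip x (mul b' one)" using assms(2) that one_in by (auto simp: is_conj_of_def)
    ultimately show ?thesis using bH mul_one_right by simp
  qed
  hence "ip (b - b') b - ip (b - b') b' = 0"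
    using bH sub by (simp add: subspace_diff)
  hence "ip (b - b') (b - b') = 0" by (simp add: ip_diff_right)
  thus ?thesis by (simp add: ip_self_zero)
qed

lemma conj_is: "a \<in> Hfin \<Longrightarrow> is_conj_of ip Hfin mul a (cj a)"
  unfolding conj_of_def
  by (rule theI') (use ex_conj conj_unique in blast)

lemma conj_in: "a \<in> Hfin \<Longrightarrow> cj a \<in> Hfin"
  using conj_is by (simp add: is_conj_of_def)

lemma conj_prop: "a \<in> Hfin \<Longrightarrow> x \<in> Hfin \<Longrightarrow> y \<in> Hfin \<Longrightarrow> ip (mul a x) y = ip x (mul (cj a) y)"
  using conj_is by (simp add: is_conj_of_def)

lemma conj_conj: assumes "a \<in> Hfin" shows "cj (cj a) = a"
proof -
  have "is_conj_of ip Hfin mul (cj a) a"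
    unfolding is_conj_of_def
  proof (intro conjI ballI)
    fix x y assume xy: "x \<in> Hfin" "y \<in> Hfin"
    have "ip (mul (cj a) x) y = cnj (ip y (mul (cj a) x))" by (rule ip_sym)
    also have "\<dots> = cnj (ip (mul a y) x)" using conj_prop[OF assms xy(2) xy(1)] by simp
    also have "\<dots> = ip x (mul a y)" using ip_sym[of x "mul a y"] by simp
    finally show "ip (mul (cj a) x) y = ip x (mul a y)" .
  qed (rule assms)
  thus ?thesis using conj_is conj_unique conj_in assms by blast
qed

lemma conj_ip: assumes "a \<in> Hfin" "b \<in> Hfin" shows "ip (cj a) (cj b) = cnj (ip a b)"
proof -
  have ca: "cj a \<in> Hfin" and cb: "cj b \<in> Hfin" using assms conj_in by auto
  have "ip (cj a) (cj b) = ip (mul (cj a) one) (cj b)" using mul_one_right ca by simp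
  also have "\<dots> = ip one (mul (cj (cj a)) (cj b))" using conj_prop[OF ca one_in cb] .
  also have "\<dots> = ip one (mul (cj b) a)" using conj_conj assms comm ca cb by simp
  also have "\<dots> = cnj (ip (mul (cj b) a) one)" by (rule ip_sym)
  also have "\<dots> = cnj (ip a (mul (cj (cj b)) one))" using conj_prop[OF cb assms(1) one_in] by simp
  also have "\<dots> = cnj (ip a b)" using conj_conj assms mul_one_right by simp
  finally show ?thesis .
qed

end

lemma dense_eq:
  fixes f g :: "'a::topological_space \<Rightarrow> 'b::t2_space"
  assumes "closure D = UNIV" "continuous_on UNIV f" "continuous_on UNIV g" "\<And>x. x \<in> D \<Longrightarrow> f x = g x"
  shows "f x = g x"
proof -
  have "closed {x. f x = g x}" using closed_Collect_eq assms(2,3) by blast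
  moreover have "D \<subseteq> {x. f x = g x}" using assms(4) by auto
  ultimately have "closure D \<subseteq> {x. f x = g x}" by (rule closure_minimal[rotated])
  thus ?thesis using assms(1) by auto
qed

lemma subspace_closure:
  fixes S :: "'a::real_normed_vector set"
  assumes "subspace S" shows "subspace (closure S)"
  unfolding subspace_def
proof (intro conjI ballI allI)
  show "0 \<in> closure S" using assms closure_subset subspace_0 by blast
next
  fix x y assume "x \<in> closure S" "y \<in> closure S"
  then obtain a b where a: "\<forall>n. a n \<in> S" "a \<longlonglongrightarrow> x" and b: "\<forall>n. b n \<in> S" "b \<longlonglongrightarrow> y"
    unfolding closure_sequential by blast
  have "\<forall>n. a n + b n \<in> S" using a b assms subspace_add by blast
  moreover have "(\<lambda>n. a n + b n) \<longlonglongrightarrow> x + y" using a b tendsto_add by blast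
  ultimately show "x + y \<in> closure S" unfolding closure_sequential
    by (intro exI[of _ "\<lambda>n. a n + b n"]) simp
next
  fix c :: real and x assume "x \<in> closure S"
  then obtain a where a: "\<forall>n. a n \<in> S" "a \<longlonglongrightarrow> x"
    unfolding closure_sequential by blast
  have "\<forall>n. c *\<^sub>R a n \<in> S" using a assms subspace_scale by blast
  moreover have "(\<lambda>n. c *\<^sub>R a n) \<longlonglongrightarrow> c *\<^sub>R x" using a tendsto_scaleR tendsto_const by blast
  ultimately show "c *\<^sub>R x \<in> closure S" unfolding closure_sequential
    by (intro exI[of _ "\<lambda>n. c *\<^sub>R a n"]) simp
qed

context chil
begin

lemma antiunitary_add:
  assumes H: "\<And>x y. ip (C x) (C y) = cnj (ip x y)"
  shows "C (v + w) = C v + C w"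
proof -
  let ?d = "C (v + w) - C v - C w"
  have "ip ?d ?d = cnj (ip (v+w) (v+w) - ip (v+w) v - ip (v+w) w - ip v (v+w) + ip v v + ip v w
      - ip w (v+w) + ip w v + ip w w)"
    by (simp add: ip_diff_left ip_diff_right H)
  also have "\<dots> = 0" by (simp add: ip_add_left ip_add_right)
  finally have "?d = 0" by (simp add: ip_self_zero)
  thus ?thesis by (simp add: algebra_simps)
qed

lemma antiunitary_cscale:
  assumes H: "\<And>x y. ip (C x) (C y) = cnj (ip x y)"
  shows "C (cscale J z v) = cscale J (cnj z) (C v)"
proof -
  let ?u = "cscale J z v"
  let ?d = "C ?u - cscale J (cnj z) (C v)"
  have "ip ?d ?d = ip (C ?u) (C ?u) - z * ip (C ?u) (C v) - cnj z * ip (C v) (C ?u) + cnj z * z * ip (C v) (C v)"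
    apply (simp add: ip_diff_left ip_diff_right ip_cscale_left ip_cscale_right)
    by (simp add: algebra_simps)
  also have "\<dots> = cnj (ip ?u ?u) - z * cnj (ip ?u v) - cnj z * cnj (ip v ?u) + cnj z * z * cnj (ip v v)"
    by (simp only: H)
  also have "\<dots> = 0" by (simp add: ip_cscale_left ip_cscale_right algebra_simps)
  finally have "?d = 0" by (simp add: ip_self_zero)
  thus ?thesis by simp
qed

lemma extension:
  fixes D :: "'h set" and c :: "'h \<Rightarrow> 'h"
  assumes dense: "closure D = UNIV" and cD: "\<forall>a\<in>D. c a \<in> D" and cc: "\<forall>a\<in>D. c (c a) = a"
    and cip: "\<forall>a\<in>D. \<forall>b\<in>D. ip (c a) (c b) = cnj (ip a b)"
  shows "\<exists>C. (\<forall>a\<in>D. C a = c a) \<and> continuous_on UNIV C \<and> (\<forall>v w. C (v + w) = C v + C w) \<and>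
     (\<forall>z v. C (cscale J z v) = cscale J (cnj z) (C v)) \<and> (\<forall>v. C (C v) = v) \<and>
     (\<forall>v w. ip (C v) (C w) = cnj (ip v w)) \<and> (\<forall>v. norm (C v) = norm v)"
proof -
  have dist_c: "dist (c a) (c b) = dist a b" if "a \<in> D" "b \<in> D" for a b
  proof -
    have "ip (c a - c b) (c a - c b) = cnj (ip (a - b) (a - b))"
      using that cip by (simp add: ip_diff_left ip_diff_right)
    also have "\<dots> = ip (a - b) (a - b)" by (simp add: ip_self)
    finally have "norm (c a - c b) = norm (a - b)" by (rule ip_eq_norm)
    thus ?thesis by (simp add: dist_norm)
  qed
  have uc: "uniformly_continuous_on D c"
    unfolding uniformly_continuous_on_def
  proof (intro allI impI)
    fix e :: real assume "e > 0"
    thus "\<exists>d>0. \<forall>x\<in>D. \<forall>x'\<in>D. dist x' x < d \<longrightarrow> dist (c x') (c x) < e"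
      using dist_c by (intro exI[of _ e]) auto
  qed
  obtain C where uC: "uniformly_continuous_on (closure D) C" and Cc: "\<And>x. x \<in> D \<Longrightarrow> c x = C x"
    using uniformly_continuous_on_extension_on_closure[OF uc] by metis
  have contC: "continuous_on UNIV C" using uC dense uniformly_continuous_imp_continuous by metis
  have ip1: "ip (C v) (C w) = cnj (ip v w)" if "w \<in> D" for v w
    by (rule dense_eq[OF dense, of "\<lambda>v. ip (C v) (C w)" "\<lambda>v. cnj (ip v w)"])
       (use that cip Cc in \<open>auto intro!: continuous_intros contC\<close>)
  have ip2: "ip (C v) (C w) = cnj (ip v w)" for v w
    by (rule dense_eq[OF dense, of "\<lambda>w. ip (C v) (C w)" "\<lambda>w. cnj (ip v w)"])
       (use ip1 in \<open>auto intro!: continuous_intros contC\<close>)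
  have CC: "C (C v) = v" for v
    by (rule dense_eq[OF dense, of "\<lambda>v. C (C v)" "\<lambda>v. v"])
       (use cD cc Cc in \<open>auto intro!: continuous_intros continuous_on_compose2[OF contC contC]\<close>)
  have nC: "norm (C v) = norm v" for v
    using ip2[of v v] by (intro ip_eq_norm) (simp add: ip_self)
  show ?thesis
    by (intro exI[of _ C] conjI allI ballI)
       (use Cc contC ip2 CC nC antiunitary_add[OF ip2] antiunitary_cscale[OF ip2] in auto)
qed

end

typedef 'a wr = "UNIV :: 'a set" morphisms unw wr by simp

lemmas wr_inv[simp] = wr_inverse[OF UNIV_I]
lemmas unw_inv[simp] = unw_inverse
lemma unw_eq_iff: "x = y \<longleftrightarrow> unw x = unw y" by (simp add: unw_inject)

instantiation wr :: (real_normed_vector) real_normed_vector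
begin
definition zero_wr_def: "0 = wr 0"
definition plus_wr_def: "x + y = wr (unw x + unw y)"
definition minus_wr_def: "x - y = wr (unw x - unw y)"
definition uminus_wr_def: "- x = wr (- unw x)"
definition scaleR_wr_def: "r *\<^sub>R x = wr (r *\<^sub>R unw x)"
definition norm_wr_def: "norm x = norm (unw x)"
definition sgn_wr_def: "sgn x = wr (sgn (unw x))"
definition dist_wr_def: "dist x y = norm (unw x - unw y)"
definition uniformity_wr_def: "(uniformity :: ('a wr \<times> 'a wr) filter) = (INF e\<in>{0<..}. principal {(x, y). dist x y < e})"
definition open_wr_def: "open (U :: 'a wr set) = (\<forall>x\<in>U. \<forall>\<^sub>F (x', y) in uniformity. x' = x \<longrightarrow> y \<in> U)"
instance
proof
  fix a b c :: "'a wr" and r s :: real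
  show "a + b + c = a + (b + c)" by (simp add: plus_wr_def add.assoc)
  show "a + b = b + a" by (simp add: plus_wr_def add.commute)
  show "0 + a = a" by (simp add: plus_wr_def zero_wr_def)
  show "- a + a = 0" by (simp add: plus_wr_def zero_wr_def uminus_wr_def)
  show "a - b = a + - b" by (simp add: plus_wr_def minus_wr_def uminus_wr_def)
  show "r *\<^sub>R (a + b) = r *\<^sub>R a + r *\<^sub>R b" by (simp add: plus_wr_def scaleR_wr_def scaleR_add_right)
  show "(r + s) *\<^sub>R a = r *\<^sub>R a + s *\<^sub>R a" by (simp add: plus_wr_def scaleR_wr_def scaleR_add_left)
  show "r *\<^sub>R s *\<^sub>R a = (r * s) *\<^sub>R a" by (simp add: scaleR_wr_def)
  show "1 *\<^sub>R a = a" by (simp add: scaleR_wr_def)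
  show "dist a b = norm (a - b)" by (simp add: dist_wr_def norm_wr_def minus_wr_def)
  show "norm a = 0 \<longleftrightarrow> a = 0" by (simp add: norm_wr_def zero_wr_def unw_eq_iff)
  show "norm (a + b) \<le> norm a + norm b" by (simp add: norm_wr_def plus_wr_def norm_triangle_ineq)
  show "norm (r *\<^sub>R a) = \<bar>r\<bar> * norm a" by (simp add: norm_wr_def scaleR_wr_def)
  show "sgn a = inverse (norm a) *\<^sub>R a" by (simp add: sgn_wr_def norm_wr_def scaleR_wr_def sgn_div_norm)
next
  show "(uniformity :: ('a wr \<times> 'a wr) filter) = (INF e\<in>{0<..}. principal {(x, y). dist x y < e})"
    by (rule uniformity_wr_def)
next
  fix U :: "'a wr set"
  show "open U = (\<forall>x\<in>U. \<forall>\<^sub>F (x', y) in uniformity. x' = x \<longrightarrow> y \<in> U)"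
    by (rule open_wr_def)
qed
end

lemma unw_add: "unw (x + y) = unw x + unw y" by (simp add: plus_wr_def)
lemma unw_scaleR: "unw (r *\<^sub>R x) = r *\<^sub>R unw x" by (simp add: scaleR_wr_def)
lemma norm_unw: "norm (unw x) = norm x" by (simp add: norm_wr_def)
lemma norm_wr: "norm (wr x) = norm x" by (simp add: norm_wr_def)
lemma dist_unw: "dist (unw x) (unw y) = dist x y" by (simp add: dist_wr_def dist_norm)

lemma bl_unw: "bounded_linear unw"
  by (rule bounded_linear_intro[where K=1]) (auto simp: unw_add unw_scaleR norm_unw)
lemma bl_wr: "bounded_linear wr"
  by (rule bounded_linear_intro[where K=1]) (auto simp: plus_wr_def scaleR_wr_def norm_wr)

instance wr :: ("{real_normed_vector,complete_space}") complete_space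
proof
  fix X :: "nat \<Rightarrow> 'a wr" assume "Cauchy X"
  hence "Cauchy (\<lambda>n. unw (X n))" unfolding Cauchy_def dist_unw .
  then obtain L where "(\<lambda>n. unw (X n)) \<longlonglongrightarrow> L" using Cauchy_convergent convergent_def by blast
  hence "(\<lambda>n. wr (unw (X n))) \<longlonglongrightarrow> wr L" using bounded_linear.tendsto[OF bl_wr] by blast
  thus "convergent X" unfolding convergent_def by auto
qed

instance wr :: ("{real_normed_vector,complete_space}") banach ..

lemma wr_add: "wr (x + y) = wr x + wr y" by (simp add: plus_wr_def)
lemma wr_scaleR: "wr (r *\<^sub>R x) = r *\<^sub>R wr x" by (simp add: scaleR_wr_def)


lemma mat2_nth[simp]: "mat2 a b c d $ 1 $ 1 = a" "mat2 a b c d $ 1 $ 2 = b"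
  "mat2 a b c d $ 2 $ 1 = c" "mat2 a b c d $ 2 $ 2 = d"
  unfolding mat2_def by simp_all

lemma rot_mult: "rot a ** rot b = rot (a + b)"
  by (simp add: vec_eq_iff forall_2 matrix_matrix_mult_def sum_2 rot_def cos_add sin_add algebra_simps)

lemma rot_SL2: "rot t \<in> SL2"
  by (simp add: SL2_def det_2 rot_def power2_eq_square[symmetric])

lemma rot_0: "rot 0 = mat 1"
  by (simp add: vec_eq_iff forall_2 rot_def mat_def)

lemma rot_int: "rot (t + (2 * pi) * of_int n) = rot t"
  by (simp add: rot_def cos_add sin_add)

lemma rot_per: "rot (t + 2 * pi) = rot t"
  by (simp add: rot_def)

lemma rot_red: "\<exists>t0. 0 \<le> t0 \<and> t0 \<le> 2 * pi \<and> rot t = rot t0"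
proof -
  define n where "n = floor (t / (2 * pi))"
  define t0 where "t0 = t - (2 * pi) * of_int n"
  have "of_int n \<le> t / (2 * pi)" "t / (2 * pi) < of_int n + 1" unfolding n_def by linarith+
  hence "0 \<le> t0" "t0 \<le> 2 * pi" unfolding t0_def using pi_gt_zero
    by (simp_all add: field_simps)
  moreover have "rot t = rot t0" using rot_int[of t0 n] unfolding t0_def by simp
  ultimately show ?thesis by blast
qed

lemma rot_decomp: "rot t = cos t *\<^sub>R mat2 1 0 0 1 + sin t *\<^sub>R mat2 0 (-1) 1 0"
  by (simp add: vec_eq_iff forall_2 rot_def)

lemma continuous_rot: "continuous_on S rot"
  unfolding rot_decomp[abs_def] by (intro continuous_intros)

lemma has_integral_in_closed_subspace:
  fixes f :: "real \<Rightarrow> 'a::real_normed_vector"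
  assumes V: "subspace V" "closed V" and f: "(f has_integral I) {a..b}" and fV: "\<forall>x\<in>{a..b}. f x \<in> V"
  shows "I \<in> V"
proof -
  have lim: "((\<lambda>p. \<Sum>(x,k)\<in>p. measure lborel k *\<^sub>R f x) \<longlongrightarrow> I) (division_filter (cbox a b))"
    using f unfolding has_integral_cbox[symmetric] by simp
  have ev: "eventually (\<lambda>p. (\<Sum>(x,k)\<in>p. measure lborel k *\<^sub>R f x) \<in> V) (division_filter (cbox a b))"
    using eventually_division_filter_tagged_division
  proof (rule eventually_mono)
    fix p assume p: "p tagged_division_of cbox a b"
    show "(\<Sum>(x,k)\<in>p. measure lborel k *\<^sub>R f x) \<in> V"
      unfolding case_prod_unfold
    proof (rule subspace_sum[OF V(1)])
      fix y assume "y \<in> p"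
      then have "fst y \<in> cbox a b" using tag_in_interval[OF p, of "fst y" "snd y"] by simp
      then have "f (fst y) \<in> V" using fV by simp
      then show "measure lborel (snd y) *\<^sub>R f (fst y) \<in> V" by (rule subspace_scale[OF V(1)])
    qed
  qed
  show ?thesis by (rule Lim_in_closed_set[OF V(2) ev division_filter_not_empty lim])
qed

lemma integral_periodic_shift:
  fixes h :: "real \<Rightarrow> 'a::banach"
  assumes hc: "continuous_on UNIV h" and per: "\<And>x. h (x + T) = h x" and p: "0 \<le> p" "p \<le> T"
  shows "integral {a..a+T} (\<lambda>x. h (x + p)) = integral {a..a+T} h"
proof -
  have int: "h integrable_on {c..d}" for c d
    using hc by (intro integrable_continuous_real) (auto intro: continuous_on_subset)
  have 1: "integral {a..a+T} (\<lambda>x. h (x + p)) = integral {a+p..a+T+p} h"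
    using integral_shift_Icc_real[of a "a+T" h p] by (simp add: o_def add.commute)
  have 2: "integral {a+p..a+T} h + integral {a+T..a+T+p} h = integral {a+p..a+T+p} h"
    by (rule Henstock_Kurzweil_Integration.integral_combine) (use p int in auto)
  have 3: "integral {a+T..a+T+p} h = integral {a..a+p} h"
    using integral_shift_Icc_real[of a "a+p" h T] per by (simp add: o_def add.commute add.left_commute)
  have 4: "integral {a..a+p} h + integral {a+p..a+T} h = integral {a..a+T} h"
    by (rule Henstock_Kurzweil_Integration.integral_combine) (use p int in auto)
  show ?thesis using 1 2 3 4 by (simp add: add.commute)
qed

locale rep = chil J ip for J :: "'h::{real_normed_vector,complete_space} \<Rightarrow> 'h" and ip +
  fixes \<pi> :: "real^2^2 \<Rightarrow> 'h \<Rightarrow> 'h"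
  assumes ur: "unitary_rep J ip \<pi>"
begin

lemma pi_lin: "g \<in> SL2 \<Longrightarrow> linear (\<pi> g)"
  using ur by (simp add: unitary_rep_def clinear_map_def)

lemma pi_ip: "g \<in> SL2 \<Longrightarrow> ip (\<pi> g v) (\<pi> g w) = ip v w"
  using ur by (simp add: unitary_rep_def)

lemma pi_norm: "g \<in> SL2 \<Longrightarrow> norm (\<pi> g v) = norm v"
  using pi_ip ip_eq_norm by blast

lemma pi_bl: "g \<in> SL2 \<Longrightarrow> bounded_linear (\<pi> g)"
  using pi_lin pi_norm
  by (intro bounded_linear_intro[where K=1]) (auto simp: linear_add linear_scale)

lemma pi_id: "\<pi> (mat 1) = id"
  using ur by (simp add: unitary_rep_def)

lemma pi_mult: "g \<in> SL2 \<Longrightarrow> h \<in> SL2 \<Longrightarrow> \<pi> (g ** h) v = \<pi> g (\<pi> h v)"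
  using ur by (simp add: unitary_rep_def)

lemma pi_cont: "continuous_on SL2 (\<lambda>g. \<pi> g v)"
  using ur by (simp add: unitary_rep_def)

lemma R_comp: "\<pi> (rot a) (\<pi> (rot b) v) = \<pi> (rot (a + b)) v"
  using pi_mult[OF rot_SL2 rot_SL2] rot_mult by metis

lemma R_0: "\<pi> (rot 0) v = v"
  using pi_id rot_0 by simp

lemma R_cont: "continuous_on S (\<lambda>t. \<pi> (rot t) v)"
  using continuous_on_compose2[OF pi_cont continuous_rot, of S v] rot_SL2 by auto

end

inductive trig :: "nat \<Rightarrow> (real \<Rightarrow> real) \<Rightarrow> bool" where
  tmono: "a + b \<le> k \<Longrightarrow> trig k (\<lambda>t. c * (cos t ^ a * sin t ^ b))"
| tadd: "trig k f \<Longrightarrow> trig k g \<Longrightarrow> trig k (\<lambda>t. f t + g t)"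

lemma trig_cong: "trig k f \<Longrightarrow> (\<And>t. f t = g t) \<Longrightarrow> trig k g"
proof -
  assume "trig k f" "\<And>t. f t = g t"
  moreover have "f = g" using \<open>\<And>t. f t = g t\<close> by (rule ext)
  ultimately show ?thesis by simp
qed

lemma trig_cong': "trig k f \<Longrightarrow> k = k' \<Longrightarrow> (\<And>t. f t = g t) \<Longrightarrow> trig k' g"
  using trig_cong by blast

lemma trig_cont: "trig k g \<Longrightarrow> continuous_on S g"
  by (induction rule: trig.induct) (auto intro!: continuous_intros)

lemma trig_per: "trig k g \<Longrightarrow> g (t + 2 * pi) = g t"
  by (induction rule: trig.induct) auto

lemma trig_scale: "trig k g \<Longrightarrow> trig k (\<lambda>t. d * g t)"
proof (induction rule: trig.induct)
  case (tmono a b k c)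
  show ?case by (rule trig_cong[OF trig.tmono[OF tmono, of "d * c"]]) simp
next
  case (tadd k f g)
  show ?case by (rule trig_cong[OF trig.tadd[OF tadd.IH]]) (simp add: distrib_left)
qed

lemma trig_le: "trig k g \<Longrightarrow> k \<le> k' \<Longrightarrow> trig k' g"
proof (induction rule: trig.induct)
  case (tmono a b k c) thus ?case by (intro trig.tmono) simp
next
  case (tadd k f g) thus ?case by (intro trig.tadd) auto
qed

lemma trig_cos: "trig k g \<Longrightarrow> trig (Suc k) (\<lambda>t. cos t * g t)"
proof (induction rule: trig.induct)
  case (tmono a b k c)
  have "Suc a + b \<le> Suc k" using tmono by simp
  show ?case by (rule trig_cong[OF trig.tmono[OF \<open>Suc a + b \<le> Suc k\<close>, of c]]) simp
next
  case (tadd k f g)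
  show ?case by (rule trig_cong[OF trig.tadd[OF tadd.IH]]) (simp add: distrib_left)
qed

lemma trig_sin: "trig k g \<Longrightarrow> trig (Suc k) (\<lambda>t. sin t * g t)"
proof (induction rule: trig.induct)
  case (tmono a b k c)
  have "a + Suc b \<le> Suc k" using tmono by simp
  show ?case by (rule trig_cong[OF trig.tmono[OF \<open>a + Suc b \<le> Suc k\<close>, of c]]) simp
next
  case (tadd k f g)
  show ?case by (rule trig_cong[OF trig.tadd[OF tadd.IH]]) (simp add: distrib_left)
qed

lemma trig_const: "trig k (\<lambda>t. c)"
  by (rule trig_cong[OF trig.tmono[of 0 0 k c]]) simp_all

lemma trig_cos_shift: "trig k g \<Longrightarrow> trig (Suc k) (\<lambda>t. cos (t - p) * g t)"
  by (rule trig_cong[OF tadd[OF trig_scale[OF trig_cos, of k g "cos p"] trig_scale[OF trig_sin, of k g "sin p"]]])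
     (simp_all add: cos_diff algebra_simps)

lemma trig_sin_shift: "trig k g \<Longrightarrow> trig (Suc k) (\<lambda>t. sin (t - p) * g t)"
  by (rule trig_cong[OF tadd[OF trig_scale[OF trig_sin, of k g "cos p"] trig_scale[OF trig_cos, of k g "- sin p"]]])
     (simp_all add: sin_diff algebra_simps)

lemma trig_shift_mono: "trig (a + b) (\<lambda>t. cos (t - p) ^ a * sin (t - p) ^ b)"
proof (induction a)
  case 0
  show ?case
  proof (induction b)
    case 0 show ?case using trig_const[of 0 1] by simp
  next
    case (Suc b)
    show ?case by (rule trig_cong'[OF trig_sin_shift[OF Suc, where p=p]]) simp_all
  qed
next
  case (Suc a)
  show ?case by (rule trig_cong'[OF trig_cos_shift[OF Suc, where p=p]]) simp_all
qed

lemma trig_shift: "trig k g \<Longrightarrow> trig k (\<lambda>t. g (t - p))"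
proof (induction rule: trig.induct)
  case (tmono a b k c)
  show ?case by (rule trig_le[OF trig_scale[OF trig_shift_mono[of a b p], of c] tmono])
next
  case (tadd k f g) thus ?case by (intro trig.tadd)
qed

lemma trig_pow: "trig k (\<lambda>t. ((1 + cos t) / 2) ^ k)"
proof (induction k)
  case 0 show ?case using trig_const[of 0 1] by simp
next
  case (Suc k)
  show ?case
    by (rule trig_cong[OF tadd[OF trig_scale[OF trig_le[OF Suc], where d="1/2"] trig_scale[OF trig_cos[OF Suc], where d="1/2"]]])
       (simp_all add: field_simps)
qed

context rep begin

definition wv :: "'h \<Rightarrow> (real \<Rightarrow> real) \<Rightarrow> 'h" where
  "wv v g = unw (integral {-pi..pi} (\<lambda>t. wr (g t *\<^sub>R \<pi> (rot t) v)))"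

lemma cont_F: "continuous_on UNIV g \<Longrightarrow> continuous_on S (\<lambda>t. wr (g t *\<^sub>R \<pi> (rot t) v))"
  by (intro continuous_intros R_cont bounded_linear.continuous_on[OF bl_wr]) (auto intro: continuous_on_subset)

lemma wv_int: "continuous_on UNIV g \<Longrightarrow> (\<lambda>t. wr (g t *\<^sub>R \<pi> (rot t) v)) integrable_on {a..b}"
  by (intro integrable_continuous_real cont_F)

lemma wv_add: "continuous_on UNIV f \<Longrightarrow> continuous_on UNIV g \<Longrightarrow> wv v (\<lambda>t. f t + g t) = wv v f + wv v g"
  unfolding wv_def scaleR_add_left wr_add by (simp add: integral_add wv_int unw_add)

lemma wv_scale: "wv v (\<lambda>t. c * f t) = c *\<^sub>R wv v f"
proof -
  have e: "(\<lambda>t. wr ((c * f t) *\<^sub>R \<pi> (rot t) v)) = (\<lambda>t. c *\<^sub>R wr (f t *\<^sub>R \<pi> (rot t) v))"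
    by (simp add: wr_scaleR)
  show ?thesis unfolding wv_def e by (simp only: integral_cmul unw_scaleR)
qed

lemma wv_has_integral: "continuous_on UNIV g \<Longrightarrow> ((\<lambda>t. g t *\<^sub>R \<pi> (rot t) v) has_integral wv v g) {-pi..pi}"
  using has_integral_linear[OF integrable_integral[OF wv_int] bl_unw, of g v "-pi" pi]
  by (simp add: wv_def o_def)

definition Bset :: "'h \<Rightarrow> nat \<Rightarrow> 'h set" where
  "Bset v k = (\<lambda>(a,b). wv v (\<lambda>t. cos t ^ a * sin t ^ b)) ` ({..k} \<times> {..k})"

lemma Bset_finite: "finite (Bset v k)"
  unfolding Bset_def by simp

lemma trig_span: "trig k g \<Longrightarrow> wv v g \<in> span (Bset v k)"
proof (induction rule: trig.induct)
  case (tmono a b k c)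
  have "(a, b) \<in> {..k} \<times> {..k}" using tmono by auto
  hence "wv v (\<lambda>t. cos t ^ a * sin t ^ b) \<in> Bset v k" unfolding Bset_def by force
  thus ?case unfolding wv_scale by (intro span_scale span_base)
next
  case (tadd k f g)
  thus ?case by (simp add: wv_add trig_cont span_add)
qed

lemma wv_rot:
  assumes g: "trig k g" and p: "0 \<le> p" "p \<le> 2 * pi"
  shows "\<pi> (rot p) (wv v g) = wv v (\<lambda>t. g (t - p))"
proof -
  have gc: "continuous_on UNIV g" using trig_cont[OF g] .
  have bl: "bounded_linear (\<pi> (rot p))" using pi_bl rot_SL2 by blast
  define L where "L = (\<lambda>y. wr (\<pi> (rot p) (unw y)))"
  have blL: "bounded_linear L" unfolding L_def
    using bounded_linear_compose[OF bl_wr bounded_linear_compose[OF bl bl_unw]] by (simp add: o_def)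
  have "\<pi> (rot p) (wv v g) = unw (L (integral {-pi..pi} (\<lambda>t. wr (g t *\<^sub>R \<pi> (rot t) v))))"
    unfolding L_def wv_def by simp
  also have "\<dots> = unw (integral {-pi..pi} (\<lambda>t. L (wr (g t *\<^sub>R \<pi> (rot t) v))))"
    using integral_linear[OF wv_int[OF gc] blL] by (simp add: o_def)
  also have "\<dots> = unw (integral {-pi..-pi + 2*pi} (\<lambda>t. wr (g ((t + p) - p) *\<^sub>R \<pi> (rot (t + p)) v)))"
    unfolding L_def using bl by (simp add: linear_simps bounded_linear.linear R_comp add.commute)
  also have "\<dots> = unw (integral {-pi..-pi + 2*pi} (\<lambda>t. wr (g (t - p) *\<^sub>R \<pi> (rot t) v)))"
  proof (subst integral_periodic_shift[where h="\<lambda>t. wr (g (t - p) *\<^sub>R \<pi> (rot t) v)"])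
    show "continuous_on UNIV (\<lambda>t. wr (g (t - p) *\<^sub>R \<pi> (rot t) v))"
      by (intro continuous_intros R_cont continuous_on_compose2[OF gc] bounded_linear.continuous_on[OF bl_wr]) auto
    show "wr (g (x + 2 * pi - p) *\<^sub>R \<pi> (rot (x + 2 * pi)) v) = wr (g (x - p) *\<^sub>R \<pi> (rot x) v)" for x
      using trig_per[OF g, of "x - p"] rot_per[of x] by (simp add: algebra_simps)
  qed (use p in auto)
  finally show ?thesis by (simp add: wv_def)
qed

lemma wv_K_finite:
  assumes g: "trig k g"
  shows "K_finite J \<pi> (wv v g)"
  unfolding K_finite_def
proof (intro exI[of _ "Bset v k"] conjI allI)
  fix t
  obtain t0 where t0: "0 \<le> t0" "t0 \<le> 2 * pi" "rot t = rot t0" using rot_red by blast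
  have "\<pi> (rot t) (wv v g) = wv v (\<lambda>s. g (s - t0))" using wv_rot[OF g t0(1,2)] t0(3) by simp
  also have "\<dots> \<in> span (Bset v k)" by (rule trig_span[OF trig_shift[OF g]])
  finally show "\<pi> (rot t) (wv v g) \<in> span (Bset v k \<union> J ` Bset v k)"
    using span_mono[of "Bset v k" "Bset v k \<union> J ` Bset v k"] by blast
qed (rule Bset_finite)

lemma wv_in:
  assumes V: "subspace V" "closed V" "G_invariant \<pi> V" and v: "v \<in> V" and g: "trig k g"
  shows "wv v g \<in> V"
proof (rule has_integral_in_closed_subspace[OF V(1,2) wv_has_integral[OF trig_cont[OF g]]])
  show "\<forall>x\<in>{- pi..pi}. g x *\<^sub>R \<pi> (rot x) v \<in> V"
    using V(3) v rot_SL2 V(1) subspace_scale unfolding G_invariant_def by blast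
qed

end

context rep begin

lemma approx:
  assumes V: "subspace V" "closed V" "G_invariant \<pi> V" and v: "v \<in> V" and e: "e > 0"
  shows "\<exists>k. \<exists>c::real. dist (c *\<^sub>R wv v (\<lambda>t. ((1 + cos t) / 2) ^ k)) v < e"
proof -
  define f :: "real \<Rightarrow> real" where "f t = norm (\<pi> (rot t) v - v)" for t
  have fc: "continuous_on UNIV f" unfolding f_def by (intro continuous_intros R_cont)
  have f0: "f 0 = 0" by (simp add: f_def R_0)
  have fb: "f t \<le> 2 * norm v" for t
  proof -
    have "f t \<le> norm (\<pi> (rot t) v) + norm v" unfolding f_def by (rule norm_triangle_ineq4)
    thus ?thesis using pi_norm[OF rot_SL2] by simp
  qed
  obtain \<delta> where \<delta>: "\<delta> > 0" "\<And>t. dist t 0 < \<delta> \<Longrightarrow> dist (f t) (f 0) < e / 2"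
  proof -
    from fc have "\<forall>x\<in>UNIV. \<forall>\<epsilon>>0. \<exists>\<delta>>0. \<forall>x'\<in>UNIV. dist x' x < \<delta> \<longrightarrow> dist (f x') (f x) < \<epsilon>"
      by (simp only: continuous_on_iff)
    hence A: "\<forall>\<epsilon>>0. \<exists>\<delta>>0. \<forall>x'\<in>UNIV. dist x' 0 < \<delta> \<longrightarrow> dist (f x') (f 0) < \<epsilon>" by blast
    have "e / 2 > 0" using e by simp
    hence "\<exists>\<delta>>0. \<forall>x'\<in>UNIV. dist x' 0 < \<delta> \<longrightarrow> dist (f x') (f 0) < e/2" using A by blast
    thus ?thesis using that by auto
  qed
  define d where "d = min \<delta> pi"
  define \<eta> where "\<eta> = d / 2"
  have d: "0 < d" "d \<le> pi" "d \<le> \<delta>" unfolding d_def using \<delta> pi_gt_zero by auto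
  have \<eta>: "0 < \<eta>" "\<eta> < d" unfolding \<eta>_def using d by auto
  define q where "q = (1 + cos d) / 2"
  define q' where "q' = (1 + cos \<eta>) / 2"
  have q0: "0 \<le> q"
  proof -
    have "0 \<le> 1 + cos d" using cos_ge_minus_one[of d] by arith
    thus ?thesis unfolding q_def by simp
  qed
  have qq: "q < q'" unfolding q_def q'_def using cos_monotone_0_pi[of \<eta> d] \<eta> d by simp
  have q'0: "0 < q'" using q0 qq by simp
  define r where "r = q / q'"
  have r: "0 \<le> r" "r < 1" unfolding r_def using q0 qq q'0 by (auto simp: divide_simps)
  define M where "M = e * \<eta> / (4 * pi * (norm v + 1))"
  have M: "M > 0" unfolding M_def using e \<eta> pi_gt_zero by (simp add: field_simps add_pos_nonneg)
  obtain k where k: "r ^ k < M" using real_arch_pow_inv[OF M r(2)] by blast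
  define P :: "real \<Rightarrow> real" where "P t = ((1 + cos t) / 2) ^ k" for t
  have P0: "0 \<le> P t" for t
  proof -
    have "0 \<le> (1 + cos t) / 2" using cos_ge_minus_one[of t] by (simp del: cos_ge_minus_one)
    thus ?thesis unfolding P_def by simp
  qed
  have Pc: "continuous_on S P" for S unfolding P_def by (intro continuous_intros) auto
  have Pint: "P integrable_on {a..b}" for a b by (intro integrable_continuous_real Pc)
  define I where "I = integral {-pi..pi} P"
  have low: "2 * \<eta> * q' ^ k \<le> I"
  proof -
    have "integral {-\<eta>..\<eta>} (\<lambda>t. q' ^ k) \<le> integral {-\<eta>..\<eta>} P"
    proof (rule integral_le)
      show "(\<lambda>t. q' ^ k) integrable_on {-\<eta>..\<eta>}" by (intro integrable_continuous_real continuous_intros)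
      show "P integrable_on {-\<eta>..\<eta>}" by (rule Pint)
      fix t assume t: "t \<in> {-\<eta>..\<eta>}"
      have "cos \<eta> \<le> cos \<bar>t\<bar>" using t \<eta> d by (intro cos_monotone_0_pi_le) auto
      hence "q' \<le> (1 + cos t) / 2" unfolding q'_def by simp
      thus "q' ^ k \<le> P t" unfolding P_def using q'0 by (intro power_mono) auto
    qed
    also have "\<dots> \<le> I" unfolding I_def
      using \<eta> d by (intro integral_subset_le Pint) (auto simp: P0)
    finally have "integral {-\<eta>..\<eta>} (\<lambda>t. q' ^ k) \<le> I" .
    moreover have "integral {-\<eta>..\<eta>} (\<lambda>t. q' ^ k) = 2 * \<eta> * q' ^ k"
      using \<eta> by (simp add: algebra_simps)
    ultimately show ?thesis by linarith
  qed
  have "0 < 2 * \<eta> * q' ^ k" using \<eta> q'0 by simp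
  hence Ipos: "I > 0" using low by linarith
  hence Inz: "I \<noteq> 0" by simp
  have pw: "P t * f t \<le> e / 2 * P t + 2 * norm v * q ^ k" if t: "t \<in> {-pi..pi}" for t
  proof (cases "\<bar>t\<bar> < d")
    case True
    have "dist t 0 < \<delta>" using True d by simp
    hence "dist (f t) (f 0) < e / 2" by (rule \<delta>(2))
    hence "\<bar>f t\<bar> < e / 2" using f0 by (simp add: dist_real_def)
    hence ft: "f t \<le> e / 2" by arith
    have "P t * f t \<le> P t * (e / 2)" using ft P0[of t] by (intro mult_left_mono) auto
    hence "P t * f t \<le> e / 2 * P t" by (simp add: mult.commute)
    moreover have "0 \<le> 2 * norm v * q ^ k" using q0 by simp
    ultimately show ?thesis by linarith
  next
    case False
    have "cos \<bar>t\<bar> \<le> cos d" using False t d by (intro cos_monotone_0_pi_le) auto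
    hence "(1 + cos t) / 2 \<le> q" unfolding q_def by simp
    moreover have "0 \<le> (1 + cos t) / 2" using cos_ge_minus_one[of t] by (simp del: cos_ge_minus_one)
    ultimately have Pq: "P t \<le> q ^ k" unfolding P_def by (intro power_mono)
    have "P t * f t \<le> q ^ k * (2 * norm v)"
      using Pq fb[of t] q0 by (intro mult_mono) (auto simp: f_def)
    also have "\<dots> = 2 * norm v * q ^ k" by simp
    finally have "P t * f t \<le> 2 * norm v * q ^ k" .
    moreover have "0 \<le> e / 2 * P t" using e P0[of t] by simp
    ultimately show ?thesis by linarith
  qed
  define w where "w = wv v P"
  have hw: "((\<lambda>t. P t *\<^sub>R \<pi> (rot t) v) has_integral w) {-pi..pi}"
    unfolding w_def by (intro wv_has_integral Pc)
  have hv: "((\<lambda>t. P t *\<^sub>R v) has_integral I *\<^sub>R v) {-pi..pi}"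
    unfolding I_def by (intro has_integral_scaleR_left integrable_integral Pint)
  have hd: "((\<lambda>t. wr (P t *\<^sub>R (\<pi> (rot t) v - v))) has_integral wr (w - I *\<^sub>R v)) {-pi..pi}"
    using has_integral_linear[OF has_integral_diff[OF hw hv] bl_wr] by (simp add: o_def scaleR_diff_right)
  have fcont: "continuous_on S (\<lambda>t. P t * f t)" for S
    by (intro continuous_on_mult Pc continuous_on_subset[OF fc]) auto
  have int1: "(\<lambda>t. wr (P t *\<^sub>R (\<pi> (rot t) v - v))) integrable_on {-pi..pi}"
    using hd by (rule has_integral_integrable)
  have int2: "(\<lambda>t. P t * f t) integrable_on {-pi..pi}"
    by (intro integrable_continuous_real fcont)
  have int3: "(\<lambda>t. e / 2 * P t) integrable_on {-pi..pi}"
    by (intro integrable_continuous_real continuous_intros Pc)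
  have int4: "(\<lambda>t. 2 * norm v * q ^ k) integrable_on {-pi..pi}"
    by (intro integrable_continuous_real continuous_intros)
  have "norm (w - I *\<^sub>R v) = norm (integral {-pi..pi} (\<lambda>t. wr (P t *\<^sub>R (\<pi> (rot t) v - v))))"
    using integral_unique[OF hd] by (simp add: norm_wr)
  also have "\<dots> \<le> integral {-pi..pi} (\<lambda>t. P t * f t)"
  proof (rule integral_norm_bound_integral[OF int1 int2])
    fix t show "norm (wr (P t *\<^sub>R (\<pi> (rot t) v - v))) \<le> P t * f t"
      using P0[of t] by (simp add: norm_wr f_def)
  qed
  also have "\<dots> \<le> integral {-pi..pi} (\<lambda>t. e / 2 * P t + 2 * norm v * q ^ k)"
    using pw by (intro integral_le int2 integrable_add int3 int4) auto
  also have "\<dots> = integral {-pi..pi} (\<lambda>t. e / 2 * P t) + integral {-pi..pi} (\<lambda>t. 2 * norm v * q ^ k)"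
    by (rule integral_add[OF int3 int4])
  also have "integral {-pi..pi} (\<lambda>t. e / 2 * P t) = e / 2 * I"
    unfolding I_def using integral_mult[OF Pint, of "e / 2"] by simp
  also have "integral {-pi..pi} (\<lambda>t. 2 * norm v * q ^ k) = 4 * pi * norm v * q ^ k"
    by (simp add: algebra_simps)
  finally have est: "norm (w - I *\<^sub>R v) \<le> e / 2 * I + 4 * pi * norm v * q ^ k" .
  have "(1 / I) *\<^sub>R w - v = (1 / I) *\<^sub>R (w - I *\<^sub>R v)" using Inz by (simp add: scaleR_diff_right)
  hence "dist ((1 / I) *\<^sub>R w) v = norm (w - I *\<^sub>R v) / I"
    using Ipos by (simp add: dist_norm)
  also have "\<dots> \<le> (e / 2 * I + 4 * pi * norm v * q ^ k) / I"
    using est Ipos by (intro divide_right_mono) auto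
  also have "\<dots> = e / 2 + 4 * pi * norm v * q ^ k / I"
    using Inz by (simp add: add_divide_distrib)
  finally have D: "dist ((1 / I) *\<^sub>R w) v \<le> e / 2 + 4 * pi * norm v * q ^ k / I" .
  have nv: "norm v + 1 > 0" by (simp add: add_nonneg_pos)
  have "4 * pi * norm v * q ^ k / I \<le> 4 * pi * norm v * q ^ k / (2 * \<eta> * q' ^ k)"
    using low \<eta> q'0 q0 Ipos by (intro divide_left_mono mult_nonneg_nonneg) auto
  also have "\<dots> = (2 * pi * norm v / \<eta>) * r ^ k"
    unfolding r_def using \<eta> q'0 by (simp add: power_divide field_simps)
  also have "\<dots> \<le> (2 * pi * (norm v + 1) / \<eta>) * r ^ k"
    using \<eta> r by (intro mult_right_mono divide_right_mono) auto
  also have "\<dots> < (2 * pi * (norm v + 1) / \<eta>) * M"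
    using k \<eta> nv by (intro mult_strict_left_mono) auto
  also have "(2 * pi * (norm v + 1) / \<eta>) * M = e / 2"
  proof -
    obtain N where N: "N = norm v + 1" by blast
    have "N > 0" using nv N by simp
    thus ?thesis unfolding M_def N[symmetric] using \<eta> pi_gt_zero by (simp add: field_simps)
  qed
  finally have "4 * pi * norm v * q ^ k / I < e / 2" .
  hence "dist ((1 / I) *\<^sub>R w) v < e" using D by linarith
  thus ?thesis unfolding w_def P_def by blast
qed

end

context rep begin

lemma Hfin_dense:
  assumes ds: "discrete_spectrum_with_fin J ip \<pi> Hfin"
  shows "closure Hfin = UNIV"
proof -
  obtain I :: "'h set set" where I: "\<forall>V\<in>I. irreducible_sub J \<pi> V" "closure (span (\<Union>I)) = UNIV"
      "Hfin = span (\<Union>V\<in>I. {v \<in> V. K_finite J \<pi> v})"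
    using ds unfolding discrete_spectrum_with_fin_def by blast
  have sub: "subspace Hfin" using I(3) subspace_span by simp
  have "V \<subseteq> closure Hfin" if VI: "V \<in> I" for V
  proof
    fix v assume v: "v \<in> V"
    have V: "subspace V" "closed V" "G_invariant \<pi> V"
      using I(1) VI unfolding irreducible_sub_def csubspace_def by auto
    show "v \<in> closure Hfin" unfolding closure_approachable
    proof (intro allI impI)
      fix e :: real assume "e > 0"
      then obtain k c where kc: "dist (c *\<^sub>R wv v (\<lambda>t. ((1 + cos t) / 2) ^ k)) v < e"
        using approx[OF V v] by blast
      have "wv v (\<lambda>t. ((1 + cos t) / 2) ^ k) \<in> V" by (rule wv_in[OF V v trig_pow])
      moreover have "K_finite J \<pi> (wv v (\<lambda>t. ((1 + cos t) / 2) ^ k))" by (rule wv_K_finite[OF trig_pow])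
      ultimately have "wv v (\<lambda>t. ((1 + cos t) / 2) ^ k) \<in> Hfin"
        unfolding I(3) using VI by (intro span_base) blast
      hence "c *\<^sub>R wv v (\<lambda>t. ((1 + cos t) / 2) ^ k) \<in> Hfin" using sub subspace_scale by blast
      thus "\<exists>y\<in>Hfin. dist y v < e" using kc by blast
    qed
  qed
  hence "\<Union>I \<subseteq> closure Hfin" by blast
  hence "span (\<Union>I) \<subseteq> closure Hfin" using subspace_closure[OF sub] by (rule span_minimal)
  hence "closure (span (\<Union>I)) \<subseteq> closure Hfin" by (intro closure_minimal) auto
  thus ?thesis using I(2) by auto
qed

end

theorem proposition9p5:
  fixes J :: "'h::{real_normed_vector,complete_space} \<Rightarrow> 'h"
    and ip :: "'h \<Rightarrow> 'h \<Rightarrow> complex"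
    and \<pi> :: "real^2^2 \<Rightarrow> 'h \<Rightarrow> 'h"
    and Hfin :: "'h set"
    and mul :: "'h \<Rightarrow> 'h \<Rightarrow> 'h"
    and one :: "'h"
  assumes "multiplicative_rep J ip \<pi> Hfin mul one"
  shows "\<exists>C :: 'h \<Rightarrow> 'h.
           (\<forall>a\<in>Hfin. C a = conj_of ip Hfin mul a) \<and>
           continuous_on UNIV C \<and>
           (\<forall>v w. C (v + w) = C v + C w) \<and>
           (\<forall>z v. C (cscale J z v) = cscale J (cnj z) (C v)) \<and>
           (\<forall>v. C (C v) = v) \<and>
           (\<forall>v w. ip (C v) (C w) = cnj (ip v w)) \<and>
           (\<forall>v. norm (C v) = norm v)"
proof -
  have ch: "complex_hilbert J ip" using assms unfolding multiplicative_rep_def by (elim conjE) assumption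
  have ur: "unitary_rep J ip \<pi>" using assms unfolding multiplicative_rep_def by (elim conjE) assumption
  have ds: "discrete_spectrum_with_fin J ip \<pi> Hfin" using assms unfolding multiplicative_rep_def by (elim conjE) assumption
  have comm: "\<forall>a\<in>Hfin. \<forall>b\<in>Hfin. mul a b = mul b a" using assms unfolding multiplicative_rep_def by (elim conjE) assumption
  have one_in: "one \<in> Hfin" using assms unfolding multiplicative_rep_def by (elim conjE) assumption
  have mul_one: "\<forall>a\<in>Hfin. mul one a = a" using assms unfolding multiplicative_rep_def by (elim conjE) assumption
  have ex_conj: "\<forall>a\<in>Hfin. \<exists>b. is_conj_of ip Hfin mul a b" using assms unfolding multiplicative_rep_def by (elim conjE) assumption
  have sub: "subspace Hfin"
    using ds unfolding discrete_spectrum_with_fin_def by (auto intro: subspace_span)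
  interpret chil J ip by (rule chil.intro[OF ch])
  interpret rep J ip \<pi> by (rule rep.intro[OF chil.intro[OF ch] rep_axioms.intro[OF ur]])
  interpret mr J ip Hfin mul one
    by (rule mr.intro[OF chil.intro[OF ch] mr_axioms.intro[OF sub one_in mul_one comm ex_conj]])
  have dense: "closure Hfin = UNIV" by (rule Hfin_dense[OF ds])
  show ?thesis
    by (rule extension[OF dense]) (use conj_in conj_conj conj_ip in auto)
qed

end
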